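(* Let $G$ be a path-pairable graph on $n$ vertices with diameter $d \geq 20$, and let $x,y$ be vertices with $d(x,y)=d$. For $i \geq 0$ let $S_i=\{z\in V(G): d(x,z)=i\}$, $s_i=|S_i|$, and $u_i=\sum_{j=0}^{i}s_j$. Then for every integer $k\geq 0$ with $u_{2k+1}\leq \frac{n}{2}$ we have $s_{2k}+s_{2k+1}\geq k$.
   Context: A graph $G$ on $n=2m$ vertices is path-pairable if for every partition of its vertex set into $m$ pairs $\{x_1,y_1\},\dots,\{x_m,y_m\}$ there exist pairwise edge-disjoint paths $P_1,\dots,P_m$ such that $P_i$ joins $x_i$ to $y_i$ for each $i$. $d(u,v)$ denotes the graph distance between vertices $u$ and $v$. *)

theory Defs
  imports Main
begin

definition simple_graph :: "'a set \<Rightarrow> ('a \<Rightarrow> 'a \<Rightarrow> bool) \<Rightarrow> bool" where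
  "simple_graph V E \<longleftrightarrow> finite V \<and> (\<forall>u v. E u v \<longrightarrow> u \<in> V \<and> v \<in> V \<and> u \<noteq> v \<and> E v u)"

definition walk :: "'a set \<Rightarrow> ('a \<Rightarrow> 'a \<Rightarrow> bool) \<Rightarrow> 'a list \<Rightarrow> bool" where
  "walk V E xs \<longleftrightarrow> xs \<noteq> [] \<and> set xs \<subseteq> V \<and> (\<forall>i. Suc i < length xs \<longrightarrow> E (xs ! i) (xs ! Suc i))"

definition gpath :: "'a set \<Rightarrow> ('a \<Rightarrow> 'a \<Rightarrow> bool) \<Rightarrow> 'a list \<Rightarrow> bool" where
  "gpath V E xs \<longleftrightarrow> walk V E xs \<and> distinct xs"

definition path_edges :: "'a list \<Rightarrow> 'a set set" where
  "path_edges xs = {{xs ! i, xs ! Suc i} | i. Suc i < length xs}"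

definition connected_graph :: "'a set \<Rightarrow> ('a \<Rightarrow> 'a \<Rightarrow> bool) \<Rightarrow> bool" where
  "connected_graph V E \<longleftrightarrow> (\<forall>u\<in>V. \<forall>v\<in>V. \<exists>xs. walk V E xs \<and> hd xs = u \<and> last xs = v)"

text \<open>Graph distance (number of edges of a shortest walk); meaningful for connected graphs.\<close>
definition gdist :: "'a set \<Rightarrow> ('a \<Rightarrow> 'a \<Rightarrow> bool) \<Rightarrow> 'a \<Rightarrow> 'a \<Rightarrow> nat" where
  "gdist V E u v = (LEAST k. \<exists>xs. walk V E xs \<and> hd xs = u \<and> last xs = v \<and> length xs = Suc k)"

definition has_diameter :: "'a set \<Rightarrow> ('a \<Rightarrow> 'a \<Rightarrow> bool) \<Rightarrow> nat \<Rightarrow> bool" where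
  "has_diameter V E d \<longleftrightarrow> V \<noteq> {} \<and> connected_graph V E \<and>
     d = Max {gdist V E u v | u v. u \<in> V \<and> v \<in> V}"

definition pairing :: "'a set \<Rightarrow> 'a set set \<Rightarrow> bool" where
  "pairing V M \<longleftrightarrow> (\<forall>p\<in>M. card p = 2) \<and> \<Union>M = V \<and>
     (\<forall>p\<in>M. \<forall>q\<in>M. p \<noteq> q \<longrightarrow> p \<inter> q = {})"

definition path_pairable :: "'a set \<Rightarrow> ('a \<Rightarrow> 'a \<Rightarrow> bool) \<Rightarrow> bool" where
  "path_pairable V E \<longleftrightarrow> even (card V) \<and>
     (\<forall>M. pairing V M \<longrightarrow>
        (\<exists>P. (\<forall>p\<in>M. gpath V E (P p) \<and> {hd (P p), last (P p)} = p) \<and>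
             (\<forall>p\<in>M. \<forall>q\<in>M. p \<noteq> q \<longrightarrow> path_edges (P p) \<inter> path_edges (P q) = {})))"

end

theory Submission
  imports Defs
begin


lemma pair_sum: "(\<Sum>j\<le>2*k+1. s j) = (\<Sum>j\<le>k. s (2*j) + s (2*j+1::nat)) " for s :: "nat \<Rightarrow> nat"
  by (induct k) (simp_all add: sum.atMost_Suc)

lemma gauss2: "2*(\<Sum>j<k. j) = k*(k-1::nat)"
proof (induct k)
  case (Suc k)
  have "2*(\<Sum>j<Suc k. j) = k*(k-1) + 2*k" using Suc by simp
  also have "\<dots> = Suc k * (Suc k - 1)" by (cases k) simp_all
  finally show ?case .
qed simp

lemma sq4: "4*(a*b) \<le> (a+b)*(a+b::nat)"
proof -
  have e: "(int a + int b)*(int a + int b) = 4*(int a*int b) + (int a - int b)*(int a - int b)"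
    by (simp add: algebra_simps)
  have "0 \<le> (int a - int b)*(int a - int b)" by simp
  hence "int (4*(a*b)) \<le> int ((a+b)*(a+b))" using e by simp
  thus ?thesis by linarith
qed
lemma arith_fin:
  fixes a b T k :: nat
  assumes "2*T \<ge> k*(k-1)" "T + a \<le> a*b" "T + a \<ge> 1" "a + b < k"
  shows False
proof -
  have k1: "a+b+1 \<le> k" using assms(4) by simp
  have "(a+b)*(a+b+1) \<le> (k-1)*k"
    using k1 by (intro mult_mono) auto
  hence h1: "(a+b)*(a+b+1) \<le> 2*T" using assms(1) by (simp add: mult.commute)
  have h2: "(a+b)*(a+b) \<le> (a+b)*(a+b+1)" by simp
  have h3: "4*(a*b) \<le> (a+b)*(a+b)" by (rule sq4)
  have "4*T + 4*a \<le> 4*(a*b)" using assms(2) by simp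
  hence "4*T + 4*a \<le> 2*T" using h1 h2 h3 by linarith
  thus False using assms(3) by linarith
qed
lemma arith_main:
  fixes s :: "nat \<Rightarrow> nat" and N :: nat
  assumes s0: "s 0 \<ge> 1"
    and key: "\<And>m. 2*(\<Sum>j\<le>Suc m. s j) \<le> N \<Longrightarrow> (\<Sum>j\<le>m. s j) \<le> s m * s (Suc m)"
  shows "2*(\<Sum>j\<le>2*k+1. s j) \<le> N \<Longrightarrow> k \<le> s(2*k) + s(2*k+1)"
proof (induction k rule: less_induct)
  case (less k)
  show ?case
  proof (cases k)
    case 0 then show ?thesis by simp
  next
    case (Suc k')
    define T where "T = (\<Sum>j<k. s(2*j) + s(2*j+1))"
    have IHs: "j \<le> s(2*j)+s(2*j+1)" if "j < k" for j
    proof -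
      have "(\<Sum>j\<le>2*j+1. s j) \<le> (\<Sum>j\<le>2*k+1. s j)"
        by (rule sum_mono2) (use that in auto)
      then show ?thesis using less.IH[OF that] less.prems by linarith
    qed
    have "(\<Sum>j<k. j) \<le> T" unfolding T_def by (rule sum_mono) (use IHs in auto)
    hence T1: "2*T \<ge> k*(k-1)" using gauss2[of k] by linarith
    have U2k: "(\<Sum>j\<le>2*k. s j) = T + s(2*k)"
    proof -
      have "(\<Sum>j\<le>2*k. s j) = (\<Sum>j\<le>2*k'+1. s j) + s(2*k)"
        using Suc by (simp add: sum.atMost_Suc)
      also have "\<dots> = T + s(2*k)" unfolding pair_sum T_def using Suc
        by (simp add: lessThan_Suc_atMost)
      finally show ?thesis .
    qed
    have "(\<Sum>j\<le>2*k. s j) \<le> s (2*k) * s (Suc (2*k))"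
      by (rule key) (use less.prems in simp)
    hence K: "T + s(2*k) \<le> s(2*k) * s(2*k+1)" using U2k by simp
    have "s 0 \<le> (\<Sum>j\<le>2*k. s j)" by (rule member_le_sum) auto
    hence "T + s(2*k) \<ge> 1" using s0 U2k by linarith
    show ?thesis
    proof (rule ccontr)
      assume "\<not> ?thesis"
      thus False using arith_fin[OF T1 K \<open>T + s(2*k) \<ge> 1\<close>] by linarith
    qed
  qed
qed


lemma walk_snoc:
  assumes "walk V E xs" "E (last xs) v" "v \<in> V"
  shows "walk V E (xs @ [v])"
  unfolding walk_def
proof (intro conjI allI impI)
  show "xs @ [v] \<noteq> []" by simp
  show "set (xs @ [v]) \<subseteq> V" using assms unfolding walk_def by auto
  fix i assume i: "Suc i < length (xs @ [v])"
  show "E ((xs @ [v]) ! i) ((xs @ [v]) ! Suc i)"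
  proof (cases "Suc i < length xs")
    case True
    then show ?thesis using assms(1) unfolding walk_def by (simp add: nth_append)
  next
    case False
    hence "i = length xs - 1" "xs \<noteq> []" using i assms(1) unfolding walk_def by auto
    then show ?thesis using assms(2) False
      by (simp add: nth_append last_conv_nth)
  qed
qed

lemma gdist_ex:
  assumes "connected_graph V E" "u \<in> V" "v \<in> V"
  shows "\<exists>xs. walk V E xs \<and> hd xs = u \<and> last xs = v \<and> length xs = Suc (gdist V E u v)"
proof -
  obtain xs where xs: "walk V E xs" "hd xs = u" "last xs = v"
    using assms unfolding connected_graph_def by blast
  hence "xs \<noteq> []" unfolding walk_def by auto
  then have "\<exists>k xs. walk V E xs \<and> hd xs = u \<and> last xs = v \<and> length xs = Suc k"
    using xs by (intro exI[of _ "length xs - 1"] exI[of _ xs]) auto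
  then show ?thesis unfolding gdist_def by (rule LeastI_ex)
qed

lemma gdist_step:
  assumes "connected_graph V E" "simple_graph V E" "x \<in> V" "E u v"
  shows "gdist V E x v \<le> gdist V E x u + 1"
proof -
  have uv: "u \<in> V" "v \<in> V" using assms(2,4) unfolding simple_graph_def by auto
  obtain xs where xs: "walk V E xs" "hd xs = x" "last xs = u" "length xs = Suc (gdist V E x u)"
    using gdist_ex[OF assms(1,3) uv(1)] by blast
  have "xs \<noteq> []" using xs unfolding walk_def by auto
  have "walk V E (xs @ [v])" using walk_snoc[OF xs(1)] xs(3) assms(4) uv by auto
  moreover have "hd (xs @ [v]) = x" using xs \<open>xs \<noteq> []\<close> by simp
  moreover have "last (xs @ [v]) = v" by simp
  moreover have "length (xs @ [v]) = Suc (gdist V E x u + 1)" using xs by simp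
  ultimately show ?thesis unfolding gdist_def[of V E x v] by (intro Least_le) blast
qed

lemma gdist_self:
  assumes "x \<in> V"
  shows "gdist V E x x = 0"
proof -
  have "walk V E [x]" using assms unfolding walk_def by auto
  hence "\<exists>xs. walk V E xs \<and> hd xs = x \<and> last xs = x \<and> length xs = Suc 0" by force
  thus ?thesis unfolding gdist_def by (intro Least_eq_0) 
qed




lemma ivt1:
  fixes g :: "'a \<Rightarrow> nat"
  assumes "xs \<noteq> []" "g (hd xs) \<le> m" "g (last xs) \<ge> m+1"
    "\<forall>i. Suc i < length xs \<longrightarrow> R (xs!i) (xs!Suc i)"
    "\<forall>u v. R u v \<longrightarrow> g v \<le> g u + 1 \<and> g u \<le> g v + 1"
  shows "\<exists>i. Suc i < length xs \<and> g (xs!i) = m \<and> g (xs!Suc i) = m+1"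
  using assms
proof (induction xs)
  case Nil then show ?case by simp
next
  case (Cons a ys)
  show ?case
  proof (cases "ys = []")
    case True then show ?thesis using Cons.prems by simp
  next
    case False
    have R0: "R a (hd ys)" using Cons.prems(4)[rule_format, of 0] False by (simp add: hd_conv_nth)
    have Rys: "\<forall>i. Suc i < length ys \<longrightarrow> R (ys!i) (ys!Suc i)"
      using Cons.prems(4) by (metis Suc_less_eq length_Cons nth_Cons_Suc)
    show ?thesis
    proof (cases "g (hd ys) \<le> m")
      case True
      with Cons.IH[OF False True _ Rys Cons.prems(5)] Cons.prems(3) False
      obtain i where "Suc i < length ys" "g (ys!i) = m" "g (ys!Suc i) = m+1" by auto
      then show ?thesis by (intro exI[of _ "Suc i"]) auto
    next
      case F2: False
      then have "g (hd ys) = m+1" "g a = m" using R0 Cons.prems(2,5) by force+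
      then show ?thesis using False by (intro exI[of _ 0]) (auto simp: hd_conv_nth)
    qed
  qed
qed

lemma ivt2:
  fixes g :: "'a \<Rightarrow> nat"
  assumes "xs \<noteq> []" "g (hd xs) \<ge> m+1" "g (last xs) \<le> m"
    "\<forall>i. Suc i < length xs \<longrightarrow> R (xs!i) (xs!Suc i)"
    "\<forall>u v. R u v \<longrightarrow> g v \<le> g u + 1 \<and> g u \<le> g v + 1"
  shows "\<exists>i. Suc i < length xs \<and> g (xs!i) = m+1 \<and> g (xs!Suc i) = m"
  using assms
proof (induction xs)
  case Nil then show ?case by simp
next
  case (Cons a ys)
  show ?case
  proof (cases "ys = []")
    case True then show ?thesis using Cons.prems by simp
  next
    case False
    have R0: "R a (hd ys)" using Cons.prems(4)[rule_format, of 0] False by (simp add: hd_conv_nth)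
    have Rys: "\<forall>i. Suc i < length ys \<longrightarrow> R (ys!i) (ys!Suc i)"
      using Cons.prems(4) by (metis Suc_less_eq length_Cons nth_Cons_Suc)
    show ?thesis
    proof (cases "g (hd ys) \<ge> m+1")
      case True
      with Cons.IH[OF False True _ Rys Cons.prems(5)] Cons.prems(3) False
      obtain i where "Suc i < length ys" "g (ys!i) = m+1" "g (ys!Suc i) = m" by auto
      then show ?thesis by (intro exI[of _ "Suc i"]) auto
    next
      case F2: False
      then have "g (hd ys) = m" "g a = m+1" using R0 Cons.prems(2,5) by force+
      then show ?thesis using False by (intro exI[of _ 0]) (auto simp: hd_conv_nth)
    qed
  qed
qed




lemma even_pairing:
  "finite R \<Longrightarrow> even (card R) \<Longrightarrow> \<exists>M. pairing R M"
proof (induction "card R" arbitrary: R rule: less_induct)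
  case less
  show ?case
  proof (cases "R = {}")
    case True
    then show ?thesis unfolding pairing_def by (intro exI[of _ "{}"]) auto
  next
    case False
    then obtain a where a: "a \<in> R" by auto
    have "card R \<noteq> 1" using less.prems by auto
    have "R - {a} \<noteq> {}"
    proof
      assume "R - {a} = {}"
      hence "R = {a}" using a by blast
      thus False using \<open>card R \<noteq> 1\<close> by simp
    qed
    then obtain b where b: "b \<in> R" "b \<noteq> a" by auto
    define R' where "R' = R - {a,b}"
    have sub: "{a,b} \<subseteq> R" using a b by simp
    have cab: "card {a,b} = 2" using b by simp
    have cR: "card R' = card R - 2" unfolding R'_def
      using card_Diff_subset[OF _ sub] cab by simp
    have c2: "card R \<ge> 2" using card_mono[OF less.prems(1) sub] cab by simp
    have fR': "finite R'" using less.prems(1) unfolding R'_def by simp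
    have "card R' < card R" "even (card R')" using cR c2 less.prems(2) by auto
    then obtain M' where M': "pairing R' M'"
      using less.hyps fR' by blast
    have subM: "\<And>r. r \<in> M' \<Longrightarrow> r \<subseteq> R'" using M' unfolding pairing_def by auto
    have "pairing R (insert {a,b} M')"
      unfolding pairing_def
    proof (intro conjI ballI impI)
      fix p assume "p \<in> insert {a, b} M'"
      then show "card p = 2" using M' cab unfolding pairing_def by auto
    next
      have "\<Union>M' = R'" using M' unfolding pairing_def by auto
      then show "\<Union> (insert {a, b} M') = R" using sub unfolding R'_def by auto
    next
      fix p q assume pq: "p \<in> insert {a, b} M'" "q \<in> insert {a, b} M'" "p \<noteq> q"
      show "p \<inter> q = {}"
      proof (cases "p = {a,b}")
        case True
        then have "q \<in> M'" using pq by auto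
        then show ?thesis using subM True unfolding R'_def by auto
      next
        case False
        then have p: "p \<in> M'" using pq by auto
        show ?thesis
        proof (cases "q = {a,b}")
          case True
          then show ?thesis using subM[OF p] unfolding R'_def by auto
        next
          case False
          then have "q \<in> M'" using pq by auto
          then show ?thesis using p pq(3) M' unfolding pairing_def by blast
        qed
      qed
    qed
    then show ?thesis by blast
  qed
qed


lemma key_graph:
  assumes sg: "simple_graph V E" and conn: "connected_graph V E" and pp: "path_pairable V E"
    and x: "x \<in> V"
    and cA: "card {z\<in>V. gdist V E x z \<le> m} \<le> card {z\<in>V. gdist V E x z \<ge> m+2}"
  shows "card {z\<in>V. gdist V E x z \<le> m}
           \<le> card {z\<in>V. gdist V E x z = m} * card {z\<in>V. gdist V E x z = Suc m}"
proof -
  define g where "g = gdist V E x"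
  define A where "A = {z\<in>V. g z \<le> m}"
  define F where "F = {z\<in>V. g z \<ge> m+2}"
  define S0 where "S0 = {z\<in>V. g z = m}"
  define S1 where "S1 = {z\<in>V. g z = Suc m}"
  have finV: "finite V" using sg unfolding simple_graph_def by auto
  have finA: "finite A" "finite F" using finV unfolding A_def F_def by auto
  obtain f where f: "f ` A \<subseteq> F" "inj_on f A"
  proof -
    have "card A \<le> card F" using cA unfolding A_def F_def g_def .
    then show ?thesis using card_le_inj[OF finA] that by blast
  qed
  have AF: "A \<inter> F = {}" unfolding A_def F_def by auto
  have AV: "A \<subseteq> V" "F \<subseteq> V" unfolding A_def F_def by auto
  define R where "R = V - A - f ` A"
  have cfA: "card (f ` A) = card A" using f(2) by (simp add: card_image)
  have "card V = card R + card (A \<union> f ` A)"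
  proof -
    have "V = R \<union> (A \<union> f ` A)" "R \<inter> (A \<union> f ` A) = {}" using AV f(1) unfolding R_def by auto
    thus ?thesis using finV by (metis card_Un_disjoint finite_Un)
  qed
  moreover have "card (A \<union> f ` A) = 2 * card A"
    using AF f(1) finA cfA by (subst card_Un_disjoint) (auto intro: finite_subset)
  ultimately have "card R = card V - 2 * card A" by simp
  moreover have "even (card V)" using pp unfolding path_pairable_def by auto
  ultimately have "even (card R)" by simp
  moreover have "finite R" using finV unfolding R_def by auto
  ultimately obtain MR where MR: "pairing R MR" using even_pairing by blast
  define M where "M = (\<lambda>a. {a, f a}) ` A \<union> MR"
  have neq: "a \<noteq> f a" if "a \<in> A" for a using that f(1) AF by auto
  have MRsub: "\<And>r. r \<in> MR \<Longrightarrow> r \<subseteq> R" using MR unfolding pairing_def by auto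
  have "pairing V M"
    unfolding pairing_def
  proof (intro conjI ballI impI)
    fix p assume "p \<in> M"
    then show "card p = 2" using MR neq unfolding pairing_def M_def by auto
  next
    have "\<Union>M = A \<union> f ` A \<union> R" using MR unfolding M_def pairing_def by auto
    then show "\<Union>M = V" using AV f(1) unfolding R_def by auto
  next
    fix p q assume pq: "p \<in> M" "q \<in> M" "p \<noteq> q"
    show "p \<inter> q = {}"
    proof (cases "p \<in> MR")
      case True
      then show ?thesis
      proof (cases "q \<in> MR")
        case True
        then show ?thesis using \<open>p \<in> MR\<close> pq MR unfolding pairing_def by auto
      next
        case False
        then obtain b where "b \<in> A" "q = {b, f b}" using pq unfolding M_def by auto
        then show ?thesis using MRsub[OF True] unfolding R_def by auto
      qed
    next
      case False
      then obtain a where a: "a \<in> A" "p = {a, f a}" using pq unfolding M_def by auto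
      show ?thesis
      proof (cases "q \<in> MR")
        case True
        then show ?thesis using MRsub[OF True] a unfolding R_def by auto
      next
        case False
        then obtain b where b: "b \<in> A" "q = {b, f b}" using pq unfolding M_def by auto
        have "a \<noteq> b" using a b pq by auto
        then have "f a \<noteq> f b" using f(2) a b by (meson inj_on_def)
        moreover have "a \<noteq> f b" "b \<noteq> f a" using a b f(1) AF by auto
        ultimately show ?thesis using a b \<open>a \<noteq> b\<close> by auto
      qed
    qed
  qed
  then obtain P where P: "\<forall>p\<in>M. gpath V E (P p) \<and> {hd (P p), last (P p)} = p"
    "\<forall>p\<in>M. \<forall>q\<in>M. p \<noteq> q \<longrightarrow> path_edges (P p) \<inter> path_edges (P q) = {}"
    using pp unfolding path_pairable_def by blast
  define Cut where "Cut = (\<lambda>(u,v). {u,v}) ` (S0 \<times> S1)"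
  have stepc: "\<forall>u v. E u v \<longrightarrow> g v \<le> g u + 1 \<and> g u \<le> g v + 1"
    using gdist_step[OF conn sg x] sg unfolding g_def simple_graph_def by blast
  have ex: "\<exists>e. e \<in> path_edges (P {a, f a}) \<and> e \<in> Cut" if a: "a \<in> A" for a
  proof -
    have pM: "{a, f a} \<in> M" using a unfolding M_def by auto
    define xs where "xs = P {a, f a}"
    have w: "walk V E xs" and he: "{hd xs, last xs} = {a, f a}"
      using P(1) pM unfolding xs_def gpath_def by auto
    have ne: "xs \<noteq> []" and sV: "set xs \<subseteq> V" and st: "\<forall>i. Suc i < length xs \<longrightarrow> E (xs!i) (xs!Suc i)"
      using w unfolding walk_def by auto
    have ga: "g a \<le> m" "g (f a) \<ge> m+2" using a f(1) unfolding A_def F_def by auto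
    have "\<exists>i. Suc i < length xs \<and> {xs!i, xs!Suc i} \<in> Cut"
    proof (cases "hd xs = a")
      case True
      have "f a \<in> {hd xs, last xs}" using he by simp
      hence "last xs = f a" using True neq[OF a] by auto
      then obtain i where i: "Suc i < length xs" "g (xs!i) = m" "g (xs!Suc i) = m+1"
        using ivt1[OF ne _ _ st stepc, of m] True ga by auto
      have "xs!i \<in> V" "xs!Suc i \<in> V" using sV i(1) by (auto dest: nth_mem)
      then have "{xs!i, xs!Suc i} \<in> Cut" using i unfolding Cut_def S0_def S1_def
        by (intro image_eqI[of _ _ "(xs!i, xs!Suc i)"]) auto
      then show ?thesis using i by blast
    next
      case False
      have "hd xs \<in> {a, f a}" unfolding he[symmetric] by simp
      have "a \<in> {hd xs, last xs}" using he by simp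
      hence "hd xs = f a" "last xs = a" using False \<open>hd xs \<in> {a, f a}\<close> by auto
      then obtain i where i: "Suc i < length xs" "g (xs!i) = m+1" "g (xs!Suc i) = m"
        using ivt2[OF ne _ _ st stepc, of m] ga by auto
      have "xs!i \<in> V" "xs!Suc i \<in> V" using sV i(1) by (auto dest: nth_mem)
      then have "{xs!Suc i, xs!i} \<in> Cut" using i unfolding Cut_def S0_def S1_def
        by (intro image_eqI[of _ _ "(xs!Suc i, xs!i)"]) auto
      then have "{xs!i, xs!Suc i} \<in> Cut" by (simp add: insert_commute)
      then show ?thesis using i by blast
    qed
    then obtain i where i: "Suc i < length xs" "{xs!i, xs!Suc i} \<in> Cut" by blast
    have "{xs!i, xs!Suc i} \<in> path_edges xs" unfolding path_edges_def
      using i(1) by (intro CollectI exI[of _ i]) simp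
    then show ?thesis using i(2) unfolding xs_def by blast
  qed
  define e where "e a = (SOME e. e \<in> path_edges (P {a, f a}) \<and> e \<in> Cut)" for a
  have e: "e a \<in> path_edges (P {a, f a}) \<and> e a \<in> Cut" if "a \<in> A" for a
    unfolding e_def by (rule someI_ex[OF ex[OF that]])
  have "inj_on e A"
  proof (rule inj_onI)
    fix a b assume ab: "a \<in> A" "b \<in> A" "e a = e b"
    show "a = b"
    proof (rule ccontr)
      assume "a \<noteq> b"
      have "{a, f a} \<noteq> {b, f b}" using ab \<open>a \<noteq> b\<close> f(1) AF by (auto simp: doubleton_eq_iff)
      moreover have "{a, f a} \<in> M" "{b, f b} \<in> M" using ab unfolding M_def by auto
      ultimately have "path_edges (P {a, f a}) \<inter> path_edges (P {b, f b}) = {}"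
        using P(2)[rule_format, of "{a, f a}" "{b, f b}"] by simp
      then show False using e[OF ab(1)] e[OF ab(2)] ab(3) by auto
    qed
  qed
  then have "card A = card (e ` A)" by (simp add: card_image)
  also have "\<dots> \<le> card Cut" using e finV unfolding Cut_def S0_def S1_def
    by (intro card_mono) auto
  also have "\<dots> \<le> card (S0 \<times> S1)" unfolding Cut_def by (rule card_image_le) (use finV in \<open>auto simp: S0_def S1_def\<close>)
  also have "\<dots> = card S0 * card S1" by (simp add: card_cartesian_product)
  finally show ?thesis unfolding A_def S0_def S1_def g_def .
qed




lemma level_sum:
  assumes "finite V"
  shows "(\<Sum>j\<le>m. card {z\<in>V. g z = j}) = card {z\<in>V. (g z :: nat) \<le> m}"
proof (induction m)
  case 0 then show ?case by simp
next
  case (Suc m)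
  have "{z\<in>V. g z \<le> Suc m} = {z\<in>V. g z \<le> m} \<union> {z\<in>V. g z = Suc m}" by auto
  moreover have "card ({z\<in>V. g z \<le> m} \<union> {z\<in>V. g z = Suc m}) = card {z\<in>V. g z \<le> m} + card {z\<in>V. g z = Suc m}"
    using assms by (intro card_Un_disjoint) auto
  ultimately show ?case using Suc by simp
qed

theorem lemma1:
  fixes V :: "'a set" and E :: "'a \<Rightarrow> 'a \<Rightarrow> bool" and d :: nat and x y :: 'a
  assumes "simple_graph V E"
    and "path_pairable V E"
    and "has_diameter V E d" and "d \<ge> 20"
    and "x \<in> V" and "y \<in> V" and "gdist V E x y = d"
  shows "\<forall>k::nat.
           2 * (\<Sum>j\<le>2*k+1. card {z\<in>V. gdist V E x z = j}) \<le> card V \<longrightarrow>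
           card {z\<in>V. gdist V E x z = 2*k} + card {z\<in>V. gdist V E x z = 2*k+1} \<ge> k"
proof (intro allI impI)
  fix k :: nat
  assume h: "2 * (\<Sum>j\<le>2*k+1. card {z\<in>V. gdist V E x z = j}) \<le> card V"
  define s where "s = (\<lambda>j. card {z\<in>V. gdist V E x z = j})"
  have finV: "finite V" using assms(1) unfolding simple_graph_def by auto
  have conn: "connected_graph V E" using assms(3) unfolding has_diameter_def by auto
  have s0: "s 0 \<ge> 1"
  proof -
    have "x \<in> {z\<in>V. gdist V E x z = 0}" using assms(5) gdist_self by fastforce
    then show ?thesis unfolding s_def using finV
      by (metis (no_types, lifting) One_nat_def Suc_leI card_gt_0_iff empty_iff finite_subset mem_Collect_eq subsetI)
  qed
  have key: "(\<Sum>j\<le>m. s j) \<le> s m * s (Suc m)" if hm: "2*(\<Sum>j\<le>Suc m. s j) \<le> card V" for m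
  proof -
    have U1: "(\<Sum>j\<le>Suc m. s j) = card {z\<in>V. gdist V E x z \<le> Suc m}"
      unfolding s_def by (rule level_sum[OF finV])
    have U0: "(\<Sum>j\<le>m. s j) = card {z\<in>V. gdist V E x z \<le> m}"
      unfolding s_def by (rule level_sum[OF finV])
    have "{z\<in>V. gdist V E x z \<ge> m+2} = V - {z\<in>V. gdist V E x z \<le> Suc m}" by auto
    hence cF: "card {z\<in>V. gdist V E x z \<ge> m+2} = card V - card {z\<in>V. gdist V E x z \<le> Suc m}"
      using finV by (simp add: card_Diff_subset)
    have "(\<Sum>j\<le>m. s j) \<le> (\<Sum>j\<le>Suc m. s j)" by (rule sum_mono2) auto
    hence "card {z\<in>V. gdist V E x z \<le> m} \<le> card {z\<in>V. gdist V E x z \<ge> m+2}"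
      using U0 U1 cF hm by linarith
    from key_graph[OF assms(1) conn assms(2,5) this] show ?thesis
      using U0 unfolding s_def by linarith
  qed
  have "k \<le> s (2*k) + s (2*k+1)"
    by (rule arith_main[where N="card V", OF s0 key]) (use h in \<open>unfold s_def\<close>)
  then show "card {z\<in>V. gdist V E x z = 2*k} + card {z\<in>V. gdist V E x z = 2*k+1} \<ge> k"
    unfolding s_def .
qed


end
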